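(* Let $\mathfrak{f}_1(z)=\sum_{n\ge0}\binom{2n}{n}^2z^n$ and $\mathfrak{f}_2(z)=\sum_{n\ge0}\frac{-1}{2n-1}\binom{2n}{n}^2z^n$. Then $\mathfrak{f}_2\in1+z\mathbb{Z}[[z]]$, and for every prime $p$, $$\mathfrak{f}_{2|p}(z)=P_{2,p}(z)\,(\mathfrak{f}_{1|p}(z))^p\qquad\text{and}\qquad \mathfrak{f}_{2|p}(z)=\frac{P_{1,p}(z)^p}{P_{2,p}(z)^{p-1}}\,\mathfrak{f}_{2|p}(z)^p,$$ where $P_{1,p},P_{2,p}\in\mathbb{F}_p[z]$ are the $p$-truncations of $\mathfrak{f}_1,\mathfrak{f}_2$.
   Context: For $f=\sum a(n)z^n\in\mathbb{Z}[[z]]$, $f_{|p}=\sum(a(n)\bmod p)z^n\in\mathbb{F}_p[[z]]$ and its $p$-truncation is $\sum_{n=0}^{p-1}(a(n)\bmod p)z^n$. *)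

theory Defs
  imports "HOL-Computational_Algebra.Computational_Algebra" "Berlekamp_Zassenhaus.Finite_Field"
begin

definition ff1 :: "int fps" where
  "ff1 = Abs_fps (\<lambda>n. int ((2*n) choose n) ^ 2)"

definition ff2_rat :: "rat fps" where
  "ff2_rat = Abs_fps (\<lambda>n. - (of_nat ((2*n) choose n) ^ 2) / (2 * of_nat n - 1))"

text \<open>Integer version of f2 (meaningful once the coefficients are known to be integers).\<close>
definition ff2 :: "int fps" where
  "ff2 = Abs_fps (\<lambda>n. \<lfloor>fps_nth ff2_rat n\<rfloor>)"

definition red_mod :: "int fps \<Rightarrow> 'p::prime_card mod_ring fps" where
  "red_mod f = Abs_fps (\<lambda>n. of_int (fps_nth f n))"

definition trunc_mod :: "int fps \<Rightarrow> 'p::prime_card mod_ring poly" where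
  "trunc_mod f = Poly (map (\<lambda>n. of_int (fps_nth f n)) [0..<CARD('p)])"

end

theory Submission
  imports Defs
begin

instance mod_ring :: (prime_card) finite_field
  by intro_classes

lemma fermat_mod_ring [simp]: "(x :: 'p::prime_card mod_ring) ^ CARD('p) = x"
  using finite_field_power_card_eq_same[of x] by simp

lemma fps_frob_nth:
  fixes F :: "'p::prime_card mod_ring fps"
  shows "(F ^ CARD('p)) $ n = (if CARD('p) dvd n then F $ (n div CARD('p)) else 0)"
proof -
  let ?p = "CARD('p)"
  have pr: "prime CHAR('p mod_ring fps)" using prime_card[where 'a='p] by simp
  have cp: "CHAR('p mod_ring fps) = ?p" by simp
  have p0: "?p > 0" using prime_card[where 'a='p] prime_gt_0_nat by blast
  define A where "A = (\<Sum>i\<le>n. fps_const (F$i) * fps_X^i)"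
  define B where "B = fps_X^(Suc n) * fps_shift (Suc n) F"
  have FAB: "F = A + B"
  proof (rule fps_ext)
    fix k
    have "A $ k = (\<Sum>i\<le>n. (if i = k then F$k else 0))"
      unfolding A_def fps_sum_nth by (rule sum.cong) (auto simp: fps_X_power_nth)
    also have "\<dots> = (if k \<le> n then F $ k else 0)" by (simp add: sum.delta')
    moreover have "B $ k = (if k < Suc n then 0 else F $ k)"
      unfolding B_def fps_X_power_mult_nth by simp
    ultimately show "F $ k = (A + B) $ k" by simp
  qed
  have "F ^ ?p = A ^ ?p + B ^ ?p"
    unfolding FAB by (rule freshmans_dream[OF pr cp[symmetric]])
  moreover have "(B ^ ?p) $ n = 0"
  proof -
    have B1: "B ^ ?p = fps_X ^ (Suc n * ?p) * (fps_shift (Suc n) F) ^ ?p"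
      unfolding B_def power_mult_distrib by (simp only: power_mult)
    have "Suc n * 1 \<le> Suc n * ?p" using p0 by (intro mult_le_mono2) simp
    hence "n < Suc n * ?p" by simp
    then show ?thesis unfolding B1 by (simp only: fps_X_power_mult_nth) simp
  qed
  moreover have "A ^ ?p = (\<Sum>i\<le>n. fps_const (F$i) * fps_X^(i * ?p))"
  proof -
    have "A ^ ?p = (\<Sum>i\<le>n. (fps_const (F$i) * fps_X^i) ^ ?p)"
      unfolding A_def by (rule freshmans_dream_sum[OF pr cp[symmetric]])
    also have "\<dots> = (\<Sum>i\<le>n. fps_const (F$i) * fps_X^(i * ?p))"
      by (simp add: power_mult_distrib fps_const_power power_mult)
    finally show ?thesis .
  qed
  moreover have "(\<Sum>i\<le>n. fps_const (F$i) * fps_X^(i * ?p)) $ n = (if ?p dvd n then F $ (n div ?p) else 0)"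
  proof -
    have "(\<Sum>i\<le>n. fps_const (F$i) * fps_X^(i * ?p)) $ n = (\<Sum>i\<le>n. (if i = n div ?p \<and> ?p dvd n then F$i else 0))"
      by (auto simp add: fps_sum_nth fps_X_power_nth intro!: sum.cong)
    also have "\<dots> = (if ?p dvd n then F $ (n div ?p) else 0)"
      by (simp add: sum.delta)
    finally show ?thesis .
  qed
  ultimately show ?thesis by simp
qed

lemma collapse_nth:
  fixes h :: "nat \<Rightarrow> 'p::prime_card mod_ring" and F :: "'p mod_ring fps"
  shows "(fps_of_poly (Poly (map h [0..<CARD('p)])) * F ^ CARD('p)) $ n
     = h (n mod CARD('p)) * F $ (n div CARD('p))"
proof -
  let ?p = "CARD('p)"
  have p0: "?p > 0" using prime_card[where 'a='p] prime_gt_0_nat by blast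
  have "(fps_of_poly (Poly (map h [0..<?p])) * F ^ ?p) $ n
     = (\<Sum>i=0..n. (if i = n mod ?p then h (n mod ?p) * F $ (n div ?p) else 0))"
    unfolding fps_mult_nth
  proof (rule sum.cong)
    fix i assume i: "i \<in> {0..n}"
    show "fps_of_poly (Poly (map h [0..<?p])) $ i * (F ^ ?p) $ (n - i) =
      (if i = n mod ?p then h (n mod ?p) * F $ (n div ?p) else 0)"
    proof (cases "i < ?p \<and> ?p dvd (n - i)")
      case True
      hence "n mod ?p = i mod ?p" using i mod_eq_dvd_iff_nat[of i n ?p] by auto
      hence ii: "i = n mod ?p" using True by simp
      have "(n - i) div ?p = n div ?p" unfolding ii minus_mod_eq_mult_div using p0 by simp
      then show ?thesis using True ii by (simp add: fps_frob_nth nth_default_def)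
    next
      case False
      have "i \<noteq> n mod ?p"
      proof
        assume ii: "i = n mod ?p"
        have "?p dvd (n - i)" unfolding ii minus_mod_eq_mult_div by simp
        moreover have "i < ?p" using ii p0 by simp
        ultimately show False using False by simp
      qed
      then show ?thesis using False by (auto simp add: fps_frob_nth nth_default_def)
    qed
  qed simp
  also have "\<dots> = h (n mod ?p) * F $ (n div ?p)"
    by (simp add: sum.delta')
  finally show ?thesis .
qed

lemma one_plus_X_power_nth:
  "((fps_X + 1 :: 'a::comm_ring_1 fps) ^ N) $ k = of_nat (N choose k)"
proof -
  have "((fps_X + 1 :: 'a fps) ^ N) $ k = (\<Sum>i\<le>N. (if i = k then of_nat (N choose k) else 0))"
    unfolding binomial_ring fps_sum_nth
    by (rule sum.cong) (auto simp flip: fps_of_nat simp: fps_X_power_nth)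
  also have "\<dots> = of_nat (N choose k)" by (simp add: sum.delta' binomial_eq_0)
  finally show ?thesis .
qed

lemma residue_unique:
  fixes p a m i :: nat
  assumes ap: "a < p" and i2: "i \<le> 2*a" and iN: "i \<le> a + p*m" and d: "p dvd (a + p*m - i)"
  shows "i = a"
proof -
  obtain t where t: "a + p*m - i = p*t" using d by (auto elim: dvdE)
  hence t': "a + p*m = i + p*t" using iN by simp
  have "t = m"
  proof (rule ccontr)
    assume "t \<noteq> m"
    then consider "Suc m \<le> t" | "Suc t \<le> m" by linarith
    then show False
    proof cases
      case 1
      hence "p * Suc m \<le> p * t" by (rule mult_le_mono2)
      thus False using t' ap by simp
    next
      case 2
      hence "p * Suc t \<le> p * m" by (rule mult_le_mono2)
      thus False using t' ap i2 by simp
    qed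
  qed
  thus ?thesis using t' by simp
qed

lemma lucas_central:
  assumes ap: "a < CARD('p)"
  shows "(of_nat ((2*(a + CARD('p)*m)) choose (a + CARD('p)*m)) :: 'p::prime_card mod_ring)
       = of_nat ((2*a) choose a) * of_nat ((2*m) choose m)"
proof -
  let ?p = "CARD('p)"
  let ?n = "a + ?p*m"
  let ?Y = "(fps_X + 1 :: 'p mod_ring fps)"
  have p0: "?p > 0" using prime_card[where 'a='p] prime_gt_0_nat by blast
  have "?Y ^ (2*?n) = ?Y ^ (2*a) * (?Y ^ (2*m)) ^ ?p"
    by (simp add: power_add flip: power_mult) (simp add: algebra_simps)
  hence "of_nat ((2*?n) choose ?n) = (?Y ^ (2*a) * (?Y ^ (2*m)) ^ ?p) $ ?n"
    by (metis one_plus_X_power_nth)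
  also have "\<dots> = (\<Sum>i=0..?n. (if i = a then of_nat ((2*a) choose a) * of_nat ((2*m) choose m) else 0))"
    unfolding fps_mult_nth
  proof (rule sum.cong)
    fix i assume i: "i \<in> {0..?n}"
    show "(?Y ^ (2*a)) $ i * ((?Y ^ (2*m)) ^ ?p) $ (?n - i) =
      (if i = a then of_nat ((2*a) choose a) * of_nat ((2*m) choose m) else 0)"
    proof (cases "i \<le> 2*a \<and> ?p dvd (?n - i)")
      case True
      hence ii: "i = a" using residue_unique[OF ap _ _] i by auto
      have "(?n - a) div ?p = m" using p0 by simp
      then show ?thesis using True ii by (simp add: fps_frob_nth one_plus_X_power_nth)
    next
      case False
      have "i \<noteq> a" using False by auto
      moreover have "(?Y ^ (2*a)) $ i * ((?Y ^ (2*m)) ^ ?p) $ (?n - i) = 0"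
        using False by (auto simp add: fps_frob_nth one_plus_X_power_nth binomial_eq_0)
      ultimately show ?thesis by simp
    qed
  qed simp
  also have "\<dots> = of_nat ((2*a) choose a) * of_nat ((2*m) choose m)"
    by (simp add: sum.delta')
  finally show ?thesis .
qed

lemma cbin_aux1: "(Suc k) * ((2*k+2) choose (k+1)) = (2*k+2) * ((2*k+1) choose k)"
  using Suc_eq_plus1 Suc_times_binomial add_2_eq_Suc' by presburger
lemma cbin_aux2: "(Suc k) * ((2*k+1) choose k) = (2*k+1) * ((2*k) choose k)"
  by (metis Suc_eq_plus1 Suc_times_binomial Suc_times_binomial_add mult_2)
lemma cbin_aux3: "(Suc k) * ((2*k) choose (k+1)) = k * ((2*k) choose k)"
proof -
  have "(Suc k) * ((2*k) choose (k+1)) = 2*k * ((2*k-1) choose k)"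
    using binomial_absorption[of k "2*k"] by simp
  moreover have "(2*k - k) * ((2*k) choose k) = 2*k * ((2*k-1) choose k)"
    by (rule binomial_absorb_comp)
  moreover have "2*k - k = k" by simp
  ultimately show ?thesis by metis
qed

definition qq :: "nat \<Rightarrow> int" where
  "qq n = (if n = 0 then -1 else 2 * (int ((2*n-2) choose (n-1)) - int ((2*n-2) choose n)))"

lemma cbin_qq: "int ((2*n) choose n) = qq n * (2 * int n - 1)"
proof (cases n)
  case 0 then show ?thesis by (simp add: qq_def)
next
  case (Suc k)
  define C2 where "C2 = int ((2*k+2) choose (k+1))"
  define C1 where "C1 = int ((2*k+1) choose k)"
  define C0 where "C0 = int ((2*k) choose k)"
  define C' where "C' = int ((2*k) choose (k+1))"
  have e1: "(int k + 1) * C2 = (2*int k+2) * C1"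
    using arg_cong[OF cbin_aux1[of k], of int] unfolding C2_def C1_def by (simp del: binomial_Suc_Suc add: algebra_simps)
  have e2: "(int k + 1) * C1 = (2*int k+1) * C0"
    using arg_cong[OF cbin_aux2[of k], of int] unfolding C0_def C1_def by (simp del: binomial_Suc_Suc add: algebra_simps)
  have e3: "(int k + 1) * C' = int k * C0"
    using arg_cong[OF cbin_aux3[of k], of int] unfolding C0_def C'_def by (simp del: binomial_Suc_Suc add: algebra_simps)
  have "(int k + 1) * ((int k + 1) * C2) = (int k + 1) * ((int k + 1) * (2 * (C0 - C') * (2 * int k + 1)))"
  proof -
    have "(int k + 1) * ((int k + 1) * C2) = (2*int k+2) * ((int k + 1) * C1)" using e1 by (simp add: algebra_simps)
    also have "\<dots> = (2*int k+2) * (2*int k+1) * C0" using e2 by (simp add: algebra_simps)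
    also have "\<dots> = (int k + 1) * (2 * (2 * int k + 1)) * ((int k + 1) * C0 - (int k + 1) * C')"
      using e3 by (simp add: algebra_simps)
    finally show ?thesis by (simp add: algebra_simps)
  qed
  hence "C2 = 2 * (C0 - C') * (2 * int k + 1)" by simp
  then show ?thesis unfolding C2_def C0_def C'_def using Suc
    by (simp del: binomial_Suc_Suc add: qq_def algebra_simps)
qed

definition gg :: "nat \<Rightarrow> int" where
  "gg n = - int ((2*n) choose n) * qq n"

lemma gg_eq: "gg n * (2 * int n - 1) = - ((int ((2*n) choose n)) ^ 2)"
proof -
  have "gg n * (2 * int n - 1) = - int ((2*n) choose n) * (qq n * (2 * int n - 1))"
    unfolding gg_def by (simp add: algebra_simps)
  also have "\<dots> = - ((int ((2*n) choose n)) ^ 2)"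
    by (simp only: cbin_qq[symmetric] power2_eq_square)
  finally show ?thesis .
qed

lemma central_zero:
  assumes ap: "a < CARD('p::prime_card)" and d: "int CARD('p) dvd (2 * int a - 1)"
  shows "(of_nat ((2*a) choose a) :: 'p mod_ring) = 0"
proof -
  let ?p = "CARD('p)"
  have pr: "prime ?p" by (rule prime_card)
  hence p2: "?p \<ge> 2" by (rule prime_ge_2_nat)
  obtain k where k: "2 * int a - 1 = int ?p * k" using d by (auto elim: dvdE)
  have "k = 1"
  proof (rule ccontr)
    assume "k \<noteq> 1"
    then consider "k \<ge> 2" | "k \<le> 0" by linarith
    then show False
    proof cases
      case 1
      hence "int ?p * 2 \<le> int ?p * k" by (intro mult_left_mono) auto
      thus False using k ap by linarith
    next
      case 2
      show False
      proof (cases "k = 0")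
        case True
        thus False using k by presburger
      next
        case False
        hence "k \<le> -1" using 2 by simp
        hence "int ?p * k \<le> int ?p * (-1)" by (intro mult_left_mono) auto
        thus False using k p2 by linarith
      qed
    qed
  qed
  hence "2 * int a = int ?p + 1" using k by simp
  hence a2: "2 * a = ?p + 1" by linarith
  hence a_ge: "a \<ge> 2" using p2 by linarith
  have "?p dvd (?p choose (a - 1))"
    by (rule dvd_choose_prime) (use ap a_ge pr p2 in auto)
  moreover have "a * ((2*a) choose a) = (?p + 1) * (?p choose (a - 1))"
    using times_binomial_minus1_eq[of a "2*a"] a_ge a2 by simp
  ultimately have "?p dvd a * ((2*a) choose a)" by (metis dvd_mult)
  moreover have "\<not> ?p dvd a" using ap a_ge by (auto dest: dvd_imp_le)
  ultimately have "?p dvd ((2*a) choose a)" using pr prime_dvd_mult_iff by blast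
  thus ?thesis by (simp add: of_nat_eq_0_iff_char_dvd)
qed

lemma gg_cong:
  assumes ap: "a < CARD('p::prime_card)"
  shows "(of_int (gg (a + CARD('p)*m)) :: 'p mod_ring)
       = of_int (gg a) * (of_nat ((2*m) choose m)) ^ 2"
proof -
  let ?p = "CARD('p)"
  let ?n = "a + ?p*m"
  let ?c = "\<lambda>k. (of_nat ((2*k) choose k) :: 'p mod_ring)"
  have luc: "?c ?n = ?c a * ?c m" by (rule lucas_central[OF ap])
  have e: "\<And>k. (of_int (gg k) :: 'p mod_ring) * of_int (2 * int k - 1) = - ((?c k) ^ 2)"
  proof -
    fix k
    have "(of_int (gg k * (2 * int k - 1)) :: 'p mod_ring) = of_int (- ((int ((2*k) choose k)) ^ 2))"
      by (simp only: gg_eq)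
    thus "(of_int (gg k) :: 'p mod_ring) * of_int (2 * int k - 1) = - ((?c k) ^ 2)" by simp
  qed
  have u: "(of_int (2 * int ?n - 1) :: 'p mod_ring) = of_int (2 * int a - 1)"
  proof -
    have "2 * int ?n - 1 = (2 * int a - 1) + int ?p * (2 * int m)" by simp
    hence "(of_int (2 * int ?n - 1) :: 'p mod_ring) = of_int (2 * int a - 1) + of_nat ?p * of_int (2 * int m)"
      by (metis of_int_add of_int_mult of_int_of_nat_eq)
    thus ?thesis by simp
  qed
  show ?thesis
  proof (cases "(of_int (2 * int a - 1) :: 'p mod_ring) = 0")
    case False
    have "of_int (gg ?n) * of_int (2 * int a - 1) = (of_int (gg a) * ?c m ^ 2) * (of_int (2 * int a - 1) :: 'p mod_ring)"
    proof -
      have "of_int (gg ?n) * of_int (2 * int a - 1) = - ((?c ?n) ^ 2)" using e[of ?n] u by simp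
      also have "\<dots> = (- ((?c a) ^ 2)) * ?c m ^ 2" using luc by (simp add: power_mult_distrib)
      also have "\<dots> = (of_int (gg a) * of_int (2 * int a - 1)) * ?c m ^ 2" using e[of a] by simp
      finally show ?thesis by (simp add: algebra_simps)
    qed
    thus ?thesis using False by simp
  next
    case True
    hence "int ?p dvd (2 * int a - 1)"
      by (metis of_int_eq_0_iff_char_dvd semiring_char_mod_ring)
    hence ca: "?c a = 0" by (rule central_zero[OF ap])
    have "(of_int (gg ?n) :: 'p mod_ring) = - ?c ?n * of_int (qq ?n)" unfolding gg_def by simp
    moreover have "(of_int (gg a) :: 'p mod_ring) = - ?c a * of_int (qq a)" unfolding gg_def by simp
    ultimately show ?thesis using luc ca by simp
  qed
qed


theorem mainTheorem14:
  "(\<forall>n. fps_nth ff2_rat n \<in> \<int>) \<and> fps_nth ff2_rat 0 = 1 \<and>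
   (red_mod ff2 :: 'p::prime_card mod_ring fps)
      = fps_of_poly (trunc_mod ff2) * (red_mod ff1) ^ CARD('p) \<and>
   (red_mod ff2 :: 'p::prime_card mod_ring fps)
      = fps_of_poly (trunc_mod ff1) ^ CARD('p)
          / fps_of_poly (trunc_mod ff2) ^ (CARD('p) - 1)
          * (red_mod ff2) ^ CARD('p)"
proof -
  let ?p = "CARD('p)"
  have p0: "?p > 0" using prime_card[where 'a='p] prime_gt_0_nat by blast
  have rat: "\<And>n. fps_nth ff2_rat n = of_int (gg n)"
  proof -
    fix n
    have D: "(2 * of_nat n - 1 :: rat) = of_int (2 * int n - 1)" by simp
    have Dnz: "2 * int n - 1 \<noteq> 0" by presburger
    have Cq: "(of_nat ((2*n) choose n) :: rat) = of_int (qq n) * of_int (2 * int n - 1)"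
      using arg_cong[OF cbin_qq[of n], of "of_int :: int \<Rightarrow> rat"] by simp
    have "fps_nth ff2_rat n = - (of_nat ((2*n) choose n) ^ 2) / of_int (2 * int n - 1)"
      unfolding ff2_rat_def D by simp
    also have "\<dots> = - of_nat ((2*n) choose n) * of_int (qq n)"
      using Dnz unfolding Cq by (simp add: power2_eq_square field_simps)
    also have "\<dots> = of_int (gg n)" unfolding gg_def by simp
    finally show "fps_nth ff2_rat n = of_int (gg n)" .
  qed
  have ff2n: "\<And>n. fps_nth ff2 n = gg n" unfolding ff2_def using rat by simp
  have r2: "\<And>n. (red_mod ff2 :: 'p mod_ring fps) $ n = of_int (gg n)"
    unfolding red_mod_def using ff2n by simp
  have r1: "\<And>n. (red_mod ff1 :: 'p mod_ring fps) $ n = (of_nat ((2*n) choose n)) ^ 2"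
    unfolding red_mod_def ff1_def by simp
  have dec: "\<And>n. n = n mod ?p + ?p * (n div ?p)" by simp
  have I1: "(red_mod ff1 :: 'p mod_ring fps) = fps_of_poly (trunc_mod ff1) * (red_mod ff1) ^ ?p"
  proof (rule fps_ext)
    fix n
    have "(fps_of_poly (trunc_mod ff1) * (red_mod ff1 :: 'p mod_ring fps) ^ ?p) $ n
        = of_int (fps_nth ff1 (n mod ?p)) * (red_mod ff1 :: 'p mod_ring fps) $ (n div ?p)"
      unfolding trunc_mod_def by (rule collapse_nth)
    also have "\<dots> = (of_nat ((2*(n mod ?p)) choose (n mod ?p)) * of_nat ((2*(n div ?p)) choose (n div ?p))) ^ 2"
      unfolding r1 by (simp add: ff1_def power_mult_distrib)
    also have "\<dots> = (of_nat ((2*n) choose n)) ^ 2"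
      using lucas_central[of "n mod ?p" "n div ?p", where 'p='p] p0 dec[of n] by simp
    finally show "(red_mod ff1 :: 'p mod_ring fps) $ n = (fps_of_poly (trunc_mod ff1) * (red_mod ff1) ^ ?p) $ n"
      unfolding r1 by simp
  qed
  have I2: "(red_mod ff2 :: 'p mod_ring fps) = fps_of_poly (trunc_mod ff2) * (red_mod ff1) ^ ?p"
  proof (rule fps_ext)
    fix n
    have "(fps_of_poly (trunc_mod ff2) * (red_mod ff1 :: 'p mod_ring fps) ^ ?p) $ n
        = of_int (fps_nth ff2 (n mod ?p)) * (red_mod ff1 :: 'p mod_ring fps) $ (n div ?p)"
      unfolding trunc_mod_def by (rule collapse_nth)
    also have "\<dots> = of_int (gg (n mod ?p)) * (of_nat ((2*(n div ?p)) choose (n div ?p))) ^ 2"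
      unfolding r1 ff2n by simp
    also have "\<dots> = of_int (gg n)"
      using gg_cong[of "n mod ?p" "n div ?p", where 'p='p] p0 dec[of n] by simp
    finally show "(red_mod ff2 :: 'p mod_ring fps) $ n = (fps_of_poly (trunc_mod ff2) * (red_mod ff1) ^ ?p) $ n"
      unfolding r2 by simp
  qed
  define F1 where "F1 = (red_mod ff1 :: 'p mod_ring fps)"
  define F2 where "F2 = (red_mod ff2 :: 'p mod_ring fps)"
  define P1 where "P1 = fps_of_poly (trunc_mod ff1 :: 'p mod_ring poly)"
  define P2 where "P2 = fps_of_poly (trunc_mod ff2 :: 'p mod_ring poly)"
  define G where "G = F1 ^ ?p"
  have I1': "F1 = P1 * G" using I1 unfolding G_def F1_def P1_def .
  have I2': "F2 = P2 * G" using I2 unfolding G_def F1_def F2_def P2_def .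
  have GG: "G = P1 ^ ?p * G ^ ?p" unfolding G_def by (subst I1') (simp add: power_mult_distrib G_def)
  have P20: "P2 $ 0 = 1" unfolding P2_def trunc_mod_def using p0 ff2n[of 0]
    by (simp add: nth_default_def gg_def qq_def)
  define Q where "Q = P2 ^ (?p - 1)"
  have Q0: "Q $ 0 = 1" unfolding Q_def using P20 by (simp add: fps_power_zeroth)
  have P2p: "P2 ^ ?p = Q * P2" unfolding Q_def using p0
    by (metis Suc_diff_1 power_Suc2)
  have "P1 ^ ?p / Q * F2 ^ ?p = P1 ^ ?p * (inverse Q * Q) * P2 * G ^ ?p"
    using Q0 unfolding I2' by (simp add: fps_divide_unit power_mult_distrib P2p mult_ac)
  also have "\<dots> = P2 * (P1 ^ ?p * G ^ ?p)" using Q0 by (simp add: inverse_mult_eq_1 inverse_mult_eq_1' mult_ac)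
  also have "\<dots> = F2" using GG I2' by simp
  finally have I3: "F2 = P1 ^ ?p / Q * F2 ^ ?p" by simp
  show ?thesis
    using rat I2 I3 unfolding F2_def P1_def Q_def P2_def
    by (auto simp: gg_def qq_def)
qed

end
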